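(* Let $k$ be a field, $M$ a regular matroid of rank $r$ on ground set $E=\{e_1,\ldots,e_n\}$ ordered by $e_1<\cdots<e_n$, with basis $B=\{e_{n-r+1},\ldots,e_n\}$, and let $\Theta^B=\{\theta_{e_j}: e_j\in B\}$ with $\theta_{e_j}=\sum_{e_i\in\mathrm{coc}(B,e_j)}a^*_{ji}x_i$ built from an admissible signed fundamental cocircuit incidence matrix $(a^*_{ji})$. For each circuit $C$ let $p_C\in k[x_1,\ldots,x_{n-r}]$ be the polynomial obtained from $\prod_{e_j\in\overline{C}}x_j$ by substituting, for each $j\ge n-r+1$, $x_j=-(a^*_{jj})^{-1}\sum_{e_i\in\mathrm{coc}(B,e_j),\,i\neq j}a^*_{ji}x_i$, and let $J(\Delta_{\mathrm{BC}}(M))=\langle p_C : C \text{ a circuit of } M\rangle\subseteq k[x_1,\ldots,x_{n-r}]$. Then, identifying $k[x_1,\ldots,x_n]/(\Theta^B)$ with $k[x_1,\ldots,x_{n-r}]$ via this substitution, $I_{\Delta_{\mathrm{BC}}(M)}+(\Theta^B)$ corresponds to $J(\Delta_{\mathrm{BC}}(M))$; in particular $$k[\Delta_{\mathrm{BC}}(M)]/(\Theta^B)\cong k[x_1,\ldots,x_{n-r}]/J(\Delta_{\mathrm{BC}}(M)).$$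
   Context: $\mathrm{coc}(B,b)$ for $b\in B$ is the unique cocircuit of $M$ contained in $(E\setminus B)\cup\{b\}$ and containing $b$; for $j\ge n-r+1$ one has $\mathrm{coc}(B,e_j)\setminus\{e_j\}\subseteq\{e_1,\ldots,e_{n-r}\}$. The fundamental cocircuit incidence matrix has rows indexed by the fundamental cocircuits $\mathrm{coc}(B,e_j)$, columns by $e_1,\ldots,e_n$, entry $1$ if $e_i\in\mathrm{coc}(B,e_j)$, else $0$. A signing replaces some $1$'s by $-1$; it is admissible over $k$ if it is the restriction to these rows of a signing of the full cocircuit incidence matrix (rows = all cocircuits) for which some signing of the circuit incidence matrix (rows = all circuits) satisfies $\widetilde{\mathcal{A}}_M(\mathcal{C})\widetilde{\mathcal{A}}_M(\mathcal{C}^* )^T=0$ over $k$. For a circuit $C$, $\overline{C}=C\setminus\{\min C\}$ is its broken circuit; $\Delta_{\mathrm{BC}}(M)$ is the complex of sets containing no broken circuit, and its Stanley–Reisner ideal is $I_{\Delta_{\mathrm{BC}}(M)}=\langle\prod_{e_i\in\overline{C}}x_i : C\text{ a circuit}\rangle\subseteq k[x_1,\ldots,x_n]$. *)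

theory Defs
  imports Complex_Main "HOL-Library.Poly_Mapping" "HOL-Combinatorics.Permutations"
begin

type_synonym 'k mpoly = "(nat \<Rightarrow>\<^sub>0 nat) \<Rightarrow>\<^sub>0 'k"

definition Const :: "'k::comm_ring_1 \<Rightarrow> 'k mpoly" where
  "Const c = Poly_Mapping.single 0 c"

definition Var :: "nat \<Rightarrow> 'k::comm_ring_1 mpoly" where
  "Var i = Poly_Mapping.single (Poly_Mapping.single i 1) 1"

definition polys_in :: "nat set \<Rightarrow> 'k::comm_ring_1 mpoly set" where
  "polys_in V = {p. \<forall>m\<in>Poly_Mapping.keys p. Poly_Mapping.keys m \<subseteq> V}"

definition peval :: "(nat \<Rightarrow> 'k::comm_ring_1 mpoly) \<Rightarrow> 'k mpoly \<Rightarrow> 'k mpoly" where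
  "peval f p = (\<Sum>m\<in>Poly_Mapping.keys p. Const (Poly_Mapping.lookup p m) * (\<Prod>i\<in>Poly_Mapping.keys m. f i ^ Poly_Mapping.lookup m i))"

definition ideal_in :: "'a::comm_ring_1 set \<Rightarrow> 'a set \<Rightarrow> 'a set" where
  "ideal_in R S = {\<Sum>g\<in>F. c g * g | F c. finite F \<and> F \<subseteq> S \<and> (\<forall>g\<in>F. c g \<in> R)}"

definition indep :: "nat set set \<Rightarrow> nat set \<Rightarrow> nat set \<Rightarrow> bool" where
  "indep \<C> E X \<longleftrightarrow> X \<subseteq> E \<and> (\<forall>C\<in>\<C>. \<not> C \<subseteq> X)"

definition is_basis :: "nat set set \<Rightarrow> nat set \<Rightarrow> nat set \<Rightarrow> bool" where
  "is_basis \<C> E B \<longleftrightarrow> indep \<C> E B \<and> (\<forall>X. indep \<C> E X \<longrightarrow> B \<subseteq> X \<longrightarrow> X = B)"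

definition cocircuits :: "nat set set \<Rightarrow> nat set \<Rightarrow> nat set set" where
  "cocircuits \<C> E = {D. D \<subseteq> E \<and> (\<forall>B. is_basis \<C> E B \<longrightarrow> D \<inter> B \<noteq> {}) \<and>
     (\<forall>D'. D' \<subset> D \<longrightarrow> (\<exists>B. is_basis \<C> E B \<and> D' \<inter> B = {}))}"

definition fund_coc :: "nat set set \<Rightarrow> nat set \<Rightarrow> nat set \<Rightarrow> nat \<Rightarrow> nat set" where
  "fund_coc \<C> E B b = (THE D. D \<in> cocircuits \<C> E \<and> D \<subseteq> (E - B) \<union> {b} \<and> b \<in> D)"

definition det_fn :: "nat \<Rightarrow> (nat \<Rightarrow> nat \<Rightarrow> int) \<Rightarrow> int" where
  "det_fn k M = (\<Sum>p | p permutes {..<k}. sign p * (\<Prod>i<k. M i (p i)))"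

definition totally_unimodular :: "nat \<Rightarrow> nat \<Rightarrow> (nat \<Rightarrow> nat \<Rightarrow> int) \<Rightarrow> bool" where
  "totally_unimodular m n A \<longleftrightarrow>
    (\<forall>k \<rho> \<gamma>. inj_on \<rho> {..<k} \<and> \<rho> ` {..<k} \<subseteq> {..<m} \<and>
              inj_on \<gamma> {..<k} \<and> \<gamma> ` {..<k} \<subseteq> {1..n} \<longrightarrow>
              det_fn k (\<lambda>i j. A (\<rho> i) (\<gamma> j)) \<in> {-1, 0, 1})"

definition col_dependent :: "nat \<Rightarrow> (nat \<Rightarrow> nat \<Rightarrow> int) \<Rightarrow> nat set \<Rightarrow> bool" where
  "col_dependent m A D \<longleftrightarrow> (\<exists>x :: nat \<Rightarrow> real. (\<exists>i\<in>D. x i \<noteq> 0) \<and>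
      (\<forall>r<m. (\<Sum>i\<in>D. of_int (A r i) * x i) = 0))"

definition col_circuits :: "nat \<Rightarrow> nat \<Rightarrow> (nat \<Rightarrow> nat \<Rightarrow> int) \<Rightarrow> nat set set" where
  "col_circuits m n A = {C. C \<subseteq> {1..n} \<and> col_dependent m A C \<and>
      (\<forall>C'. C' \<subset> C \<longrightarrow> \<not> col_dependent m A C')}"

definition regular_matroid :: "nat \<Rightarrow> nat set set \<Rightarrow> bool" where
  "regular_matroid n \<C> \<longleftrightarrow> (\<exists>m A. totally_unimodular m n A \<and> \<C> = col_circuits m n A)"

definition is_signing :: "nat set set \<Rightarrow> nat set \<Rightarrow> (nat set \<Rightarrow> nat \<Rightarrow> 'k::comm_ring_1) \<Rightarrow> bool" where
  "is_signing \<X> E s \<longleftrightarrow> (\<forall>X\<in>\<X>. \<forall>i\<in>E.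
      (i \<in> X \<longrightarrow> s X i = 1 \<or> s X i = -1) \<and> (i \<notin> X \<longrightarrow> s X i = 0))"

text \<open>a j i is the (signed) entry of row coc(B,e_j), column e_i.\<close>
definition admissible :: "nat set set \<Rightarrow> nat set \<Rightarrow> nat set \<Rightarrow> (nat \<Rightarrow> nat \<Rightarrow> 'k::field) \<Rightarrow> bool" where
  "admissible \<C> E B a \<longleftrightarrow> (\<exists>\<tau> \<sigma>. is_signing (cocircuits \<C> E) E \<tau> \<and> is_signing \<C> E \<sigma> \<and>
      (\<forall>C\<in>\<C>. \<forall>D\<in>cocircuits \<C> E. (\<Sum>i\<in>E. \<sigma> C i * \<tau> D i) = 0) \<and>
      (\<forall>j\<in>B. \<forall>i\<in>E. a j i = \<tau> (fund_coc \<C> E B j) i))"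

definition theta :: "nat set set \<Rightarrow> nat set \<Rightarrow> nat set \<Rightarrow> (nat \<Rightarrow> nat \<Rightarrow> 'k::field) \<Rightarrow> nat \<Rightarrow> 'k mpoly" where
  "theta \<C> E B a j = (\<Sum>i\<in>fund_coc \<C> E B j. Const (a j i) * Var i)"

definition subst_var :: "nat \<Rightarrow> nat \<Rightarrow> nat set set \<Rightarrow> (nat \<Rightarrow> nat \<Rightarrow> 'k::field) \<Rightarrow> nat \<Rightarrow> 'k mpoly" where
  "subst_var n r \<C> a j = (if j \<le> n - r then Var j else
     - (Const (inverse (a j j)) * (\<Sum>i\<in>fund_coc \<C> {1..n} {n-r+1..n} j - {j}. Const (a j i) * Var i)))"

text \<open>Broken circuit monomial (order e_1 < ... < e_n, i.e. numerical order).\<close>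
definition bc_monomial :: "nat set \<Rightarrow> 'k::comm_ring_1 mpoly" where
  "bc_monomial C = (\<Prod>j\<in>C - {Min C}. Var j)"

end

theory Submission
  imports Defs "HOL-Library.Function_Algebras"
begin


definition mono_eval :: "(nat \<Rightarrow> 'k::comm_ring_1 mpoly) \<Rightarrow> (nat \<Rightarrow>\<^sub>0 nat) \<Rightarrow> 'k mpoly" where
  "mono_eval f m = (\<Prod>i\<in>Poly_Mapping.keys m. f i ^ Poly_Mapping.lookup m i)"

lemma peval_alt: "peval f p = (\<Sum>m\<in>Poly_Mapping.keys p. Const (Poly_Mapping.lookup p m) * mono_eval f m)"
  by (simp add: peval_def mono_eval_def)

lemma keys_add_nat: "Poly_Mapping.keys (m1 + m2) = Poly_Mapping.keys m1 \<union> Poly_Mapping.keys (m2::nat \<Rightarrow>\<^sub>0 nat)"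
  by (auto simp: in_keys_iff lookup_add)

lemma mono_eval_superset:
  assumes "finite S" "Poly_Mapping.keys m \<subseteq> S"
  shows "mono_eval f m = (\<Prod>i\<in>S. f i ^ Poly_Mapping.lookup m i)"
  unfolding mono_eval_def
  by (rule prod.mono_neutral_left) (use assms in \<open>auto simp: in_keys_iff\<close>)

lemma mono_eval_add: "mono_eval f (m1 + m2) = mono_eval f m1 * mono_eval f m2"
proof -
  let ?S = "Poly_Mapping.keys m1 \<union> Poly_Mapping.keys m2"
  have "mono_eval f (m1 + m2) = (\<Prod>i\<in>?S. f i ^ Poly_Mapping.lookup (m1+m2) i)"
    by (rule mono_eval_superset) (auto simp: keys_add_nat)
  also have "\<dots> = (\<Prod>i\<in>?S. f i ^ Poly_Mapping.lookup m1 i) * (\<Prod>i\<in>?S. f i ^ Poly_Mapping.lookup m2 i)"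
    by (simp add: lookup_add power_add prod.distrib)
  also have "\<dots> = mono_eval f m1 * mono_eval f m2"
    using mono_eval_superset[where S="?S" and m=m1 and f=f] mono_eval_superset[where S="?S" and m=m2 and f=f] by simp
  finally show ?thesis .
qed

lemma mono_eval_0 [simp]: "mono_eval f 0 = 1"
  by (simp add: mono_eval_def)

lemma Const_0 [simp]: "Const 0 = 0" by (simp add: Const_def)
lemma Const_1 [simp]: "Const 1 = 1" by (simp add: Const_def)
lemma Const_add: "Const (a + b) = Const a + Const b" by (simp add: Const_def single_add)
lemma Const_mult: "Const (a * b) = Const a * Const b" by (simp add: Const_def mult_single)
lemma Const_uminus: "Const (- a) = - Const a" by (simp add: Const_def single_uminus)

lemma peval_superset:
  assumes "finite S" "Poly_Mapping.keys p \<subseteq> S"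
  shows "peval f p = (\<Sum>m\<in>S. Const (Poly_Mapping.lookup p m) * mono_eval f m)"
  unfolding peval_alt
  by (rule sum.mono_neutral_left) (use assms in \<open>auto simp: in_keys_iff\<close>)

lemma peval_add: "peval f (p + q) = peval f p + peval f q"
proof -
  let ?S = "Poly_Mapping.keys p \<union> Poly_Mapping.keys q"
  have "peval f (p + q) = (\<Sum>m\<in>?S. Const (Poly_Mapping.lookup (p+q) m) * mono_eval f m)"
    by (rule peval_superset) (use keys_add[of p q] in auto)
  also have "\<dots> = (\<Sum>m\<in>?S. Const (Poly_Mapping.lookup p m) * mono_eval f m) + (\<Sum>m\<in>?S. Const (Poly_Mapping.lookup q m) * mono_eval f m)"
    by (simp add: lookup_add Const_add distrib_right sum.distrib)
  also have "\<dots> = peval f p + peval f q"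
    using peval_superset[where S="?S" and p=p and f=f] peval_superset[where S="?S" and p=q and f=f] by simp
  finally show ?thesis .
qed

lemma peval_0 [simp]: "peval f 0 = 0"
  by (simp add: peval_def)

lemma peval_sum: "peval f (sum g A) = (\<Sum>x\<in>A. peval f (g x))"
  by (induction A rule: infinite_finite_induct) (auto simp: peval_add)

lemma peval_single: "peval f (Poly_Mapping.single m c) = Const c * mono_eval f m"
  by (subst peval_superset[of "{m}"]) auto

lemma poly_repr: "p = (\<Sum>m\<in>Poly_Mapping.keys p. Poly_Mapping.single m (Poly_Mapping.lookup p m))"
  by (rule poly_mapping_eqI) (auto simp: lookup_sum lookup_single when_def in_keys_iff
      sum.delta[OF finite_keys] )

lemma peval_mult: "peval f (p * q) = peval f p * peval f q"
proof -
  have "p * q = (\<Sum>m\<in>Poly_Mapping.keys p. Poly_Mapping.single m (Poly_Mapping.lookup p m)) *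
      (\<Sum>m\<in>Poly_Mapping.keys q. Poly_Mapping.single m (Poly_Mapping.lookup q m))"
    using poly_repr[of p] poly_repr[of q] by simp
  also have "\<dots> = (\<Sum>m\<in>Poly_Mapping.keys p. \<Sum>m'\<in>Poly_Mapping.keys q.
       Poly_Mapping.single (m + m') (Poly_Mapping.lookup p m * Poly_Mapping.lookup q m'))"
    by (simp add: sum_product mult_single)
  finally have "peval f (p * q) = (\<Sum>m\<in>Poly_Mapping.keys p. \<Sum>m'\<in>Poly_Mapping.keys q.
       (Const (Poly_Mapping.lookup p m) * mono_eval f m) * (Const (Poly_Mapping.lookup q m') * mono_eval f m'))"
    by (simp add: peval_sum peval_single mono_eval_add Const_mult mult_ac)
  also have "\<dots> = peval f p * peval f q"
    by (simp add: peval_alt sum_product)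
  finally show ?thesis .
qed

lemma peval_uminus: "peval f (- p) = - peval f p"
  using peval_add[of f p "-p"] by (metis add.inverse_unique peval_0 right_minus)

lemma peval_diff: "peval f (p - q) = peval f p - peval f q"
  using peval_add[of f p "-q"] peval_uminus[of f q] by simp

lemma peval_Const [simp]: "peval f (Const c) = Const c"
  using peval_single[of f 0 c] by (simp add: Const_def)

lemma peval_1 [simp]: "peval f 1 = 1"
  using peval_Const[of f 1] by simp

lemma peval_Var [simp]: "peval f (Var i) = f i"
  unfolding Var_def by (simp add: peval_single mono_eval_def)

lemma peval_power: "peval f (p ^ k) = peval f p ^ k"
  by (induction k) (auto simp: peval_mult)

lemma peval_prod: "peval f (prod g A) = (\<Prod>x\<in>A. peval f (g x))"
  by (induction A rule: infinite_finite_induct) (auto simp: peval_mult)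

lemma peval_cong:
  assumes "\<And>m i. m \<in> Poly_Mapping.keys p \<Longrightarrow> i \<in> Poly_Mapping.keys m \<Longrightarrow> f i = g i"
  shows "peval f p = peval g p"
  unfolding peval_alt mono_eval_def
  by (intro sum.cong refl arg_cong2[where f=times] prod.cong) (auto simp: assms)

lemma Var_power: "Var i ^ k = Poly_Mapping.single (Poly_Mapping.single i k) 1"
  by (induction k) (auto simp: Var_def mult_single single_add[symmetric])

lemma prod_single: "(\<Prod>i\<in>A. Poly_Mapping.single (g i) (1::'k::comm_ring_1)) = Poly_Mapping.single (\<Sum>i\<in>A. g i) 1"
  by (induction A rule: infinite_finite_induct) (auto simp: mult_single)

lemma peval_Var_id: fixes p :: "'k::comm_ring_1 mpoly" shows "peval Var p = p"
proof -
  have "mono_eval (Var :: nat \<Rightarrow> 'k mpoly) m = Poly_Mapping.single m 1" for m :: "nat \<Rightarrow>\<^sub>0 nat"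
    using poly_repr[of m] by (simp add: mono_eval_def Var_power prod_single)
  then have "peval Var p = (\<Sum>m\<in>Poly_Mapping.keys p. Poly_Mapping.single m (Poly_Mapping.lookup p m))"
    by (simp add: peval_alt Const_def mult_single)
  then show ?thesis using poly_repr[of p] by simp
qed




lemma polys_in_0 [simp]: "0 \<in> polys_in V" by (simp add: polys_in_def)
lemma polys_in_add: "p \<in> polys_in V \<Longrightarrow> q \<in> polys_in V \<Longrightarrow> p + q \<in> polys_in V"
  using keys_add[of p q] by (auto simp: polys_in_def)
lemma polys_in_mult: "p \<in> polys_in V \<Longrightarrow> q \<in> polys_in V \<Longrightarrow> p * q \<in> polys_in V"
  using keys_mult[of p q] by (fastforce simp: polys_in_def keys_add_nat)
lemma polys_in_uminus: "p \<in> polys_in V \<Longrightarrow> - p \<in> polys_in V"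
  by (auto simp: polys_in_def in_keys_iff)
lemma polys_in_diff: "p \<in> polys_in V \<Longrightarrow> q \<in> polys_in V \<Longrightarrow> p - q \<in> polys_in V"
  using polys_in_add[OF _ polys_in_uminus] by (metis diff_conv_add_uminus)
lemma polys_in_Const [simp]: "Const c \<in> polys_in V"
  by (simp add: polys_in_def Const_def)
lemma polys_in_1 [simp]: "1 \<in> polys_in V"
  using polys_in_Const[of 1] by simp
lemma polys_in_Var: "i \<in> V \<Longrightarrow> Var i \<in> polys_in V"
  by (simp add: polys_in_def Var_def)
lemma polys_in_sum: "(\<And>x. x \<in> A \<Longrightarrow> g x \<in> polys_in V) \<Longrightarrow> sum g A \<in> polys_in V"
  by (induction A rule: infinite_finite_induct) (auto intro: polys_in_add)
lemma polys_in_prod: "(\<And>x. x \<in> A \<Longrightarrow> g x \<in> polys_in V) \<Longrightarrow> prod g A \<in> polys_in V"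
  by (induction A rule: infinite_finite_induct) (auto intro: polys_in_mult)
lemma polys_in_power: "p \<in> polys_in V \<Longrightarrow> p ^ k \<in> polys_in V"
  by (induction k) (auto intro: polys_in_mult)
lemma polys_in_mono: "V \<subseteq> W \<Longrightarrow> polys_in V \<subseteq> polys_in W"
  by (auto simp: polys_in_def)

lemma peval_in:
  assumes "\<And>i. i \<in> V \<Longrightarrow> f i \<in> polys_in W" "p \<in> polys_in V"
  shows "peval f p \<in> polys_in W"
  using assms unfolding peval_def
  by (intro polys_in_sum polys_in_mult polys_in_Const polys_in_prod polys_in_power)
     (auto simp: polys_in_def)

lemma peval_id:
  assumes "\<And>i. i \<in> V \<Longrightarrow> f i = Var i" "p \<in> polys_in V"
  shows "peval f p = p"
proof -
  have "peval f p = peval Var p"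
    by (rule peval_cong) (use assms in \<open>auto simp: polys_in_def\<close>)
  then show ?thesis by (simp add: peval_Var_id)
qed

lemma polys_in_induct [consumes 1, case_names const var add mult]:
  assumes "p \<in> polys_in V"
    and "\<And>c. P (Const c)" and "\<And>i. i \<in> V \<Longrightarrow> P (Var i)"
    and "\<And>p q. P p \<Longrightarrow> P q \<Longrightarrow> P (p + q)" and "\<And>p q. P p \<Longrightarrow> P q \<Longrightarrow> P (p * q)"
  shows "P p"
proof -
  have sum: "P (sum g A)" if "\<And>x. x \<in> A \<Longrightarrow> P (g x)" for g and A :: "'b set"
    using that by (induction A rule: infinite_finite_induct) (auto intro: assms(4) assms(2)[of 0, simplified])
  have prod: "P (prod g A)" if "\<And>x. x \<in> A \<Longrightarrow> P (g x)" for g and A :: "'b set"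
    using that by (induction A rule: infinite_finite_induct) (auto intro: assms(5) assms(2)[of 1, simplified])
  have pow: "P (q ^ k)" if "P q" for q k
    using that by (induction k) (auto intro: assms(5) assms(2)[of 1, simplified])
  have "P (peval Var p)"
    unfolding peval_def
    by (intro sum assms(5) assms(2) prod pow assms(3)) (use assms(1) in \<open>auto simp: polys_in_def\<close>)
  then show ?thesis by (simp add: peval_Var_id)
qed

lemma ideal_in_0: "0 \<in> ideal_in R S"
  unfolding ideal_in_def mem_Collect_eq by (rule exI[of _ "{}"], rule exI[of _ "\<lambda>_. 0"]) simp

lemma ideal_in_gen: "c \<in> R \<Longrightarrow> s \<in> S \<Longrightarrow> c * s \<in> ideal_in R S"
  unfolding ideal_in_def mem_Collect_eq by (rule exI[of _ "{s}"], rule exI[of _ "\<lambda>_. c"]) simp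

lemma ideal_in_add:
  assumes "x \<in> ideal_in (polys_in V) S" "y \<in> ideal_in (polys_in V) S"
  shows "x + y \<in> ideal_in (polys_in V) S"
proof -
  obtain F1 c1 where 1: "x = (\<Sum>g\<in>F1. c1 g * g)" "finite F1" "F1 \<subseteq> S" "\<forall>g\<in>F1. c1 g \<in> polys_in V"
    using assms(1) by (auto simp: ideal_in_def)
  obtain F2 c2 where 2: "y = (\<Sum>g\<in>F2. c2 g * g)" "finite F2" "F2 \<subseteq> S" "\<forall>g\<in>F2. c2 g \<in> polys_in V"
    using assms(2) by (auto simp: ideal_in_def)
  define c where "c g = (if g \<in> F1 then c1 g else 0) + (if g \<in> F2 then c2 g else 0)" for g
  have "(\<Sum>g\<in>F1 \<union> F2. c g * g) = (\<Sum>g\<in>F1 \<union> F2. (if g \<in> F1 then c1 g * g else 0)) + (\<Sum>g\<in>F1 \<union> F2. (if g \<in> F2 then c2 g * g else 0))"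
    unfolding sum.distrib[symmetric] by (rule sum.cong) (auto simp: c_def distrib_right)
  also have "\<dots> = x + y"
    using 1 2 by (simp add: sum.inter_restrict[symmetric] Int_absorb1)
  finally have "x + y = (\<Sum>g\<in>F1 \<union> F2. c g * g)" by simp
  moreover have "\<forall>g\<in>F1 \<union> F2. c g \<in> polys_in V"
    using 1 2 by (auto simp: c_def intro: polys_in_add)
  ultimately show ?thesis using 1 2 unfolding ideal_in_def by blast
qed

lemma ideal_in_sum:
  "(\<And>x. x \<in> A \<Longrightarrow> g x \<in> ideal_in (polys_in V) S) \<Longrightarrow> sum g A \<in> ideal_in (polys_in V) S"
  by (induction A rule: infinite_finite_induct) (auto intro: ideal_in_add ideal_in_0)

lemma ideal_in_mult:
  assumes "r \<in> polys_in V" "x \<in> ideal_in (polys_in V) S"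
  shows "r * x \<in> ideal_in (polys_in V) S"
proof -
  obtain F c where 1: "x = (\<Sum>g\<in>F. c g * g)" "finite F" "F \<subseteq> S" "\<forall>g\<in>F. c g \<in> polys_in V"
    using assms(2) by (auto simp: ideal_in_def)
  have "r * x = (\<Sum>g\<in>F. (r * c g) * g)" using 1 by (simp add: sum_distrib_left mult.assoc)
  moreover have "\<forall>g\<in>F. r * c g \<in> polys_in V" using 1 assms(1) by (auto intro: polys_in_mult)
  ultimately show ?thesis using 1 unfolding ideal_in_def mem_Collect_eq
    by (intro exI[of _ F] exI[of _ "\<lambda>g. r * c g"]) auto
qed

lemma ideal_in_subset:
  assumes "S \<subseteq> polys_in V"
  shows "ideal_in (polys_in V) S \<subseteq> polys_in V"
  using assms by (auto simp: ideal_in_def intro!: polys_in_sum polys_in_mult)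

lemma ideal_in_mono: "S \<subseteq> S' \<Longrightarrow> ideal_in R S \<subseteq> ideal_in R S'"
  unfolding ideal_in_def by blast

lemma ideal_in_image:
  assumes "x \<in> ideal_in R S"
    and "\<And>c g. c \<in> R \<Longrightarrow> g \<in> S \<Longrightarrow> P (c * g)" and "P 0" and "\<And>x y. P x \<Longrightarrow> P y \<Longrightarrow> P (x + y)"
  shows "P x"
proof -
  obtain F c where 1: "x = (\<Sum>g\<in>F. c g * g)" "finite F" "F \<subseteq> S" "\<forall>g\<in>F. c g \<in> R"
    using assms(1) by (auto simp: ideal_in_def)
  have "P (\<Sum>g\<in>F'. c g * g)" if "F' \<subseteq> F" for F'
    using finite_subset[OF that 1(2)] that
    by (induction F' rule: finite_induct) (use 1 assms in auto)
  then show ?thesis using 1 by auto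
qed




lemma indep_subset: "indep \<C> E X \<Longrightarrow> Y \<subseteq> X \<Longrightarrow> indep \<C> E Y"
  unfolding indep_def by blast

lemma coc_min: assumes "D \<in> cocircuits \<C> E" "D' \<subset> D" shows "\<exists>B. is_basis \<C> E B \<and> D' \<inter> B = {}"
proof -
  have "\<forall>D'. D' \<subset> D \<longrightarrow> (\<exists>B. is_basis \<C> E B \<and> D' \<inter> B = {})"
    using assms(1) unfolding cocircuits_def by simp
  then show ?thesis using assms(2) by simp
qed

lemma coc_meets: assumes "D \<in> cocircuits \<C> E" "is_basis \<C> E B" shows "D \<inter> B \<noteq> {}"
proof -
  have "\<forall>B. is_basis \<C> E B \<longrightarrow> D \<inter> B \<noteq> {}"
    using assms(1) unfolding cocircuits_def by simp
  then show ?thesis using assms(2) by simp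
qed

lemma basis_indep: "is_basis \<C> E B \<Longrightarrow> indep \<C> E B"
  unfolding is_basis_def by simp

lemma basis_max: "is_basis \<C> E B \<Longrightarrow> indep \<C> E X \<Longrightarrow> B \<subseteq> X \<Longrightarrow> X = B"
  unfolding is_basis_def by simp

lemma basis_insert: "is_basis \<C> E B \<Longrightarrow> e \<notin> B \<Longrightarrow> \<not> indep \<C> E (insert e B)"
  using basis_max[of \<C> E B "insert e B"] by blast

lemma indep_sub_E: "indep \<C> E X \<Longrightarrow> X \<subseteq> E"
  unfolding indep_def by blast

locale aug_matroid =
  fixes \<C> :: "nat set set" and E :: "nat set"
  assumes finE: "finite E"
    and aug: "\<And>I J. indep \<C> E I \<Longrightarrow> indep \<C> E J \<Longrightarrow> card I < card J \<Longrightarrow> \<exists>e\<in>J - I. indep \<C> E (insert e I)"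
begin

lemma indep_finite: "indep \<C> E X \<Longrightarrow> finite X"
  by (rule finite_subset[OF indep_sub_E finE])

lemma basis_card_le:
  assumes "is_basis \<C> E B" "is_basis \<C> E B'"
  shows "card B \<le> card B'"
proof (rule ccontr)
  assume "\<not> card B \<le> card B'"
  then have "card B' < card B" by simp
  then obtain e where e: "e \<in> B - B'" "indep \<C> E (insert e B')"
    using aug[OF basis_indep[OF assms(2)] basis_indep[OF assms(1)]] by blast
  then show False using basis_insert[OF assms(2)] by blast
qed

definition "fcoc B b = {b} \<union> {e \<in> E - B. is_basis \<C> E (insert e (B - {b}))}"

lemma fcoc_meets:
  assumes B: "is_basis \<C> E B" and b: "b \<in> B" and B': "is_basis \<C> E B'"
  shows "fcoc B b \<inter> B' \<noteq> {}"
proof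
  assume dis: "fcoc B b \<inter> B' = {}"
  then have bB': "b \<notin> B'" by (auto simp: fcoc_def)
  have finB: "finite B" using indep_finite[OF basis_indep[OF B]] .
  have "card B \<le> card B'" using basis_card_le[OF B B'] .
  moreover have "card (B - {b}) = card B - 1" using finB b by simp
  moreover have c1: "card B \<ge> 1" using finB b by (metis One_nat_def card_gt_0_iff empty_iff less_eq_Suc_le)
  ultimately have lt: "card (B - {b}) < card B'" by linarith
  have iBb: "indep \<C> E (B - {b})" using indep_subset[OF basis_indep[OF B]] by blast
  obtain e where e: "e \<in> B' - (B - {b})" "indep \<C> E (insert e (B - {b}))"
    using aug[OF iBb basis_indep[OF B'] lt] by blast
  have eb: "e \<noteq> b" using e bB' by auto
  have eB: "e \<notin> B" using e eb by auto
  have eE: "e \<in> E" using indep_sub_E[OF e(2)] by blast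
  have cardI: "card (insert e (B - {b})) = card B"
    using finB eB b c1 by (simp add: card_insert_if)
  have "is_basis \<C> E (insert e (B - {b}))"
    unfolding is_basis_def
  proof (intro conjI allI impI)
    show "indep \<C> E (insert e (B - {b}))" by fact
    fix X assume X: "indep \<C> E X" "insert e (B - {b}) \<subseteq> X"
    show "X = insert e (B - {b})"
    proof (rule ccontr)
      assume "X \<noteq> insert e (B - {b})"
      then have "insert e (B - {b}) \<subset> X" using X by blast
      then have "card (insert e (B - {b})) < card X"
        by (rule psubset_card_mono[OF indep_finite[OF X(1)]])
      then have "card B < card X" using cardI by simp
      then obtain f where "f \<in> X - B" "indep \<C> E (insert f B)"
        using aug[OF basis_indep[OF B] X(1)] by blast
      then show False using basis_insert[OF B] by blast
    qed
  qed
  then have "e \<in> fcoc B b" using eE eB unfolding fcoc_def by blast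
  then show False using dis e by blast
qed

lemma fcoc_cocircuit:
  assumes B: "is_basis \<C> E B" and b: "b \<in> B"
  shows "fcoc B b \<in> cocircuits \<C> E"
proof -
  have BE: "B \<subseteq> E" using indep_sub_E[OF basis_indep[OF B]] .
  have min: "\<exists>B'. is_basis \<C> E B' \<and> D' \<inter> B' = {}" if D': "D' \<subset> fcoc B b" for D'
  proof -
    obtain x where x: "x \<in> fcoc B b" "x \<notin> D'" using D' by blast
    show ?thesis
    proof (cases "x = b")
      case True
      then have "D' \<inter> B = {}" using D' x unfolding fcoc_def by blast
      then show ?thesis using B by blast
    next
      case False
      then have xb: "x \<in> E - B" "is_basis \<C> E (insert x (B - {b}))" using x unfolding fcoc_def by blast+
      have "D' \<inter> insert x (B - {b}) = {}" using D' x unfolding fcoc_def by blast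
      then show ?thesis using xb by blast
    qed
  qed
  have sub: "fcoc B b \<subseteq> E" using BE b unfolding fcoc_def by blast
  show ?thesis unfolding cocircuits_def mem_Collect_eq
    using sub fcoc_meets[OF B b] min by blast
qed

lemma fcoc_unique:
  assumes B: "is_basis \<C> E B" and b: "b \<in> B"
    and D: "D \<in> cocircuits \<C> E" "D \<subseteq> (E - B) \<union> {b}" "b \<in> D"
  shows "D = fcoc B b"
proof -
  have sub: "fcoc B b \<subseteq> D"
  proof
    fix e assume e: "e \<in> fcoc B b"
    show "e \<in> D"
    proof (cases "e = b")
      case True then show ?thesis using D by simp
    next
      case False
      then have eb: "is_basis \<C> E (insert e (B - {b}))" using e unfolding fcoc_def by blast
      then have "D \<inter> insert e (B - {b}) \<noteq> {}" using coc_meets[OF D(1)] by blast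
      then show ?thesis using D(2) by blast
    qed
  qed
  show ?thesis
  proof (rule ccontr)
    assume "D \<noteq> fcoc B b"
    then have "fcoc B b \<subset> D" using sub by blast
    then obtain B' where "is_basis \<C> E B'" "fcoc B b \<inter> B' = {}"
      using coc_min[OF D(1)] by blast
    then show False using fcoc_meets[OF B b] by blast
  qed
qed

lemma fund_coc_props:
  assumes B: "is_basis \<C> E B" and b: "b \<in> B"
  shows "fund_coc \<C> E B b \<in> cocircuits \<C> E \<and> fund_coc \<C> E B b \<subseteq> (E - B) \<union> {b} \<and> b \<in> fund_coc \<C> E B b"
proof -
  have BE: "B \<subseteq> E" using indep_sub_E[OF basis_indep[OF B]] .
  have P1: "fcoc B b \<in> cocircuits \<C> E" by (rule fcoc_cocircuit[OF B b])
  have P2: "fcoc B b \<subseteq> (E - B) \<union> {b} \<and> b \<in> fcoc B b"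
    using BE b unfolding fcoc_def by blast
  have "fund_coc \<C> E B b = fcoc B b"
    unfolding fund_coc_def
  proof (rule the_equality)
    show "fcoc B b \<in> cocircuits \<C> E \<and> fcoc B b \<subseteq> (E - B) \<union> {b} \<and> b \<in> fcoc B b" using P1 P2 by blast
    fix D assume "D \<in> cocircuits \<C> E \<and> D \<subseteq> (E - B) \<union> {b} \<and> b \<in> D"
    then show "D = fcoc B b" using fcoc_unique[OF B b] by blast
  qed
  then show ?thesis using P1 P2 by simp
qed

end




lemma fun_vs: "Vector_Spaces.vector_space (\<lambda>(c::real) (f::nat \<Rightarrow> real). (\<lambda>r. c * f r))"
  by unfold_locales (auto simp: fun_eq_iff algebra_simps)

lemma col_dep_intro: "\<exists>i\<in>C. x i \<noteq> 0 \<Longrightarrow> \<forall>r<m. (\<Sum>i\<in>C. real_of_int (A r i) * x i) = 0 \<Longrightarrow> col_dependent m A C"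
  unfolding col_dependent_def by blast

lemma col_dep_mono:
  assumes "finite X" "C \<subseteq> X" "col_dependent m A C"
  shows "col_dependent m A X"
proof -
  obtain x :: "nat \<Rightarrow> real" where x: "\<exists>i\<in>C. x i \<noteq> 0" "\<forall>r<m. (\<Sum>i\<in>C. real_of_int (A r i) * x i) = 0"
    using assms(3) by (auto simp: col_dependent_def)
  define y where "y i = (if i \<in> C then x i else 0)" for i
  have "(\<Sum>i\<in>X. of_int (A r i) * y i) = (\<Sum>i\<in>C. of_int (A r i) * x i)" for r
  proof -
    have "(\<Sum>i\<in>X. of_int (A r i) * y i) = (\<Sum>i\<in>X. if i \<in> C then of_int (A r i) * x i else 0)"
      by (rule sum.cong) (auto simp: y_def)
    also have "\<dots> = (\<Sum>i\<in>X \<inter> C. of_int (A r i) * x i)"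
      using assms(1) by (simp add: sum.inter_restrict)
    also have "X \<inter> C = C" using assms(2) by auto
    finally show ?thesis by simp
  qed
  then show ?thesis using x assms(2) unfolding col_dependent_def
    by (intro exI[of _ y]) (auto simp: y_def)
qed

lemma indep_col:
  "indep (col_circuits m n A) {1..n} X \<longleftrightarrow> X \<subseteq> {1..n} \<and> \<not> col_dependent m A X"
proof
  assume X: "indep (col_circuits m n A) {1..n} X"
  then have XE: "X \<subseteq> {1..n}" by (simp add: indep_def)
  then have finX: "finite X" by (rule finite_subset) simp
  show "X \<subseteq> {1..n} \<and> \<not> col_dependent m A X"
  proof (intro conjI XE notI)
    assume dX: "col_dependent m A X"
    let ?P = "\<lambda>C. C \<subseteq> X \<and> col_dependent m A C"
    have "?P X" using dX by simp
    from ex_has_least_nat[of ?P X card, OF this]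
    obtain C where C: "?P C" "\<forall>C'. ?P C' \<longrightarrow> card C \<le> card C'"
      by blast
    have finC: "finite C" using C(1) finX by (meson rev_finite_subset)
    have "C \<in> col_circuits m n A"
      unfolding col_circuits_def mem_Collect_eq
    proof (intro conjI allI impI)
      show "C \<subseteq> {1..n}" using C XE by auto
      show "col_dependent m A C" using C by auto
      fix C' assume "C' \<subset> C"
      then have "card C' < card C" using finC psubset_card_mono by blast
      moreover have "C' \<subseteq> X" using C(1) \<open>C' \<subset> C\<close> by blast
      ultimately show "\<not> col_dependent m A C'" using C(2) by (meson not_le)
    qed
    then show False using X C(1) by (auto simp: indep_def)
  qed
next
  assume X: "X \<subseteq> {1..n} \<and> \<not> col_dependent m A X"
  then have finX: "finite X" using finite_atLeastAtMost rev_finite_subset by metis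
  show "indep (col_circuits m n A) {1..n} X"
    unfolding indep_def
  proof (intro conjI ballI notI)
    show "X \<subseteq> {1..n}" using X by simp
    fix C assume "C \<in> col_circuits m n A" "C \<subseteq> X"
    then show False using col_dep_mono[OF finX, of C m A] X by (auto simp: col_circuits_def)
  qed
qed

context
  fixes m :: nat and A :: "nat \<Rightarrow> nat \<Rightarrow> int"
begin

definition col :: "nat \<Rightarrow> nat \<Rightarrow> real" where
  "col i = (\<lambda>r. if r < m then of_int (A r i) else 0)"

interpretation V: vector_space "\<lambda>(c::real) (f::nat \<Rightarrow> real). (\<lambda>r. c * f r)"
  by (rule fun_vs)

lemma sum_fun_apply: "(\<Sum>i\<in>I. g i) r = (\<Sum>i\<in>I. g i r)" for g :: "'a \<Rightarrow> nat \<Rightarrow> real"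
  by (induction I rule: infinite_finite_induct) auto

lemma col_comb: "(\<Sum>i\<in>I. (\<lambda>r. x i * col i r)) r = (if r < m then (\<Sum>i\<in>I. of_int (A r i) * x i) else 0)"
  by (auto simp: sum_fun_apply col_def mult.commute)

lemma indep_inj:
  assumes "finite I" "\<not> col_dependent m A I"
  shows "inj_on col I"
proof
  fix i j assume ij: "i \<in> I" "j \<in> I" "col i = col j"
  show "i = j"
  proof (rule ccontr)
    assume ne: "i \<noteq> j"
    define x where "x k = (if k = i then 1 else if k = j then -1 else (0::real))" for k
    have "(\<Sum>k\<in>I. of_int (A r k) * x k) = 0" if "r < m" for r
    proof -
      have "(\<Sum>k\<in>I. of_int (A r k) * x k) = (\<Sum>k\<in>I. (if k = i then of_int (A r i) else 0) + (if k = j then - of_int (A r j) else 0))"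
        by (rule sum.cong) (auto simp: x_def ne)
      also have "\<dots> = of_int (A r i) - of_int (A r j)"
        using assms(1) ij by (simp add: sum.distrib)
      also have "\<dots> = 0" using fun_cong[OF ij(3), of r] that by (simp add: col_def)
      finally show ?thesis .
    qed
    then have "col_dependent m A I" unfolding col_dependent_def
      using ij by (intro exI[of _ x]) (auto simp: x_def)
    then show False using assms by simp
  qed
qed

lemma indep_V:
  assumes "finite I" "\<not> col_dependent m A I"
  shows "V.independent (col ` I)"
proof (rule V.independent_if_scalars_zero)
  show "finite (col ` I)" using assms by simp
  fix c v assume sum0: "(\<Sum>v\<in>col ` I. (\<lambda>r. c v * v r)) = 0" and v: "v \<in> col ` I"
  have "(\<Sum>i\<in>I. (\<lambda>r. c (col i) * col i r)) = 0"
    using sum0 sum.reindex[OF indep_inj[OF assms], of "\<lambda>v. (\<lambda>r. c v * v r)"] by simp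
  then have eq: "\<forall>r<m. (\<Sum>i\<in>I. of_int (A r i) * c (col i)) = 0"
  proof (intro allI impI)
    fix r assume r: "r < m"
    assume h: "(\<Sum>i\<in>I. (\<lambda>r. c (col i) * col i r)) = 0"
    have "(\<Sum>i\<in>I. (\<lambda>r. c (col i) * col i r)) r = 0" by (simp add: h)
    then show "(\<Sum>i\<in>I. of_int (A r i) * c (col i)) = 0"
      using col_comb[of "\<lambda>i. c (col i)" I r] r by simp
  qed
  have "\<forall>i\<in>I. c (col i) = 0"
  proof (rule ccontr)
    assume "\<not> (\<forall>i\<in>I. c (col i) = 0)"
    then have "\<exists>i\<in>I. c (col i) \<noteq> 0" by blast
    from col_dep_intro[of I "\<lambda>i. c (col i)", OF this] eq have "col_dependent m A I" by simp
    then show False using assms(2) by simp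
  qed
  then show "c v = 0" using v by auto
qed

lemma in_span:
  assumes "finite I" "\<not> col_dependent m A I" "e \<notin> I" "col_dependent m A (insert e I)"
  shows "col e \<in> V.span (col ` I)"
proof -
  obtain x :: "nat \<Rightarrow> real" where x: "\<exists>i\<in>insert e I. x i \<noteq> 0" "\<forall>r<m. (\<Sum>i\<in>insert e I. real_of_int (A r i) * x i) = 0"
    using assms(4) by (auto simp: col_dependent_def)
  have xe: "x e \<noteq> 0"
  proof
    assume "x e = 0"
    then have "\<forall>r<m. (\<Sum>i\<in>I. of_int (A r i) * x i) = 0" "\<exists>i\<in>I. x i \<noteq> 0"
      using x assms(1,3) by auto
    then have "col_dependent m A I" by (rule col_dep_intro[rotated])
    then show False using assms(2) by simp
  qed
  have "col e = (\<Sum>i\<in>I. (\<lambda>r. (- x i / x e) * col i r))"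
  proof
    fix r
    show "col e r = (\<Sum>i\<in>I. (\<lambda>r. (- x i / x e) * col i r)) r"
    proof (cases "r < m")
      case True
      have "of_int (A r e) * x e + (\<Sum>i\<in>I. of_int (A r i) * x i) = 0"
        using x(2) True assms(1,3) by simp
      then have "of_int (A r e) = - (\<Sum>i\<in>I. of_int (A r i) * x i) / x e"
        using xe by (simp add: field_simps)
      also have "\<dots> = (\<Sum>i\<in>I. of_int (A r i) * (- x i / x e))"
        by (simp add: sum_divide_distrib sum_negf[symmetric])
      finally show ?thesis using True col_comb[of "\<lambda>i. - x i / x e" I r] by (simp add: col_def)
    next
      case False
      then show ?thesis using col_comb[of "\<lambda>i. - x i / x e" I r] by (simp add: col_def)
    qed
  qed
  also have "\<dots> \<in> V.span (col ` I)"
  proof (rule V.span_sum)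
    fix i assume "i \<in> I"
    then have "col i \<in> V.span (col ` I)" by (intro V.span_base) simp
    from V.span_scale[OF this, of "- x i / x e"]
    show "(\<lambda>r. (- x i / x e) * col i r) \<in> V.span (col ` I)" .
  qed
  finally show ?thesis .
qed

lemma col_aug:
  assumes I: "finite I" "\<not> col_dependent m A I" and J: "finite J" "\<not> col_dependent m A J"
    and lt: "card I < card J"
  shows "\<exists>e\<in>J - I. \<not> col_dependent m A (insert e I)"
proof (rule ccontr)
  assume "\<not> ?thesis"
  then have "\<forall>e\<in>J - I. col_dependent m A (insert e I)" by blast
  then have dep: "\<And>e. e \<in> J \<Longrightarrow> e \<notin> I \<Longrightarrow> col_dependent m A (insert e I)" by blast
  have "col ` J \<subseteq> V.span (col ` I)"
  proof
    fix v assume "v \<in> col ` J"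
    then obtain e where e: "e \<in> J" "v = col e" by blast
    show "v \<in> V.span (col ` I)"
    proof (cases "e \<in> I")
      case True
      then show ?thesis using e by (simp add: V.span_base)
    next
      case False
      then show ?thesis using e in_span[OF I False dep[OF e(1) False]] by simp
    qed
  qed
  then have "card (col ` J) \<le> card (col ` I)"
    using V.independent_span_bound[OF _ indep_V[OF J]] I by simp
  moreover have "card (col ` J) = card J" using card_image[OF indep_inj[OF J]] .
  moreover have "card (col ` I) \<le> card I" using card_image_le[OF I(1)] .
  ultimately show False using lt by simp
qed

end

lemma col_aug_matroid: "aug_matroid (col_circuits m n A) {1..n}"
proof
  show "finite {1..n}" by simp
  fix I J assume I: "indep (col_circuits m n A) {1..n} I" and J: "indep (col_circuits m n A) {1..n} J"
    and lt: "card I < card J"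
  have I': "I \<subseteq> {1..n}" "\<not> col_dependent m A I" using I unfolding indep_col by auto
  have J': "J \<subseteq> {1..n}" "\<not> col_dependent m A J" using J unfolding indep_col by auto
  have fI: "finite I" using I'(1) by (metis finite_atLeastAtMost rev_finite_subset)
  have fJ: "finite J" using J'(1) by (metis finite_atLeastAtMost rev_finite_subset)
  obtain e where e: "e \<in> J - I" "\<not> col_dependent m A (insert e I)"
    using col_aug[where m=m and A=A, OF fI I'(2) fJ J'(2) lt] by blast
  show "\<exists>e\<in>J - I. indep (col_circuits m n A) {1..n} (insert e I)"
    unfolding indep_col using e I' J' by blast
qed




theorem proposition4p1:
  fixes \<C> :: "nat set set" and n r :: nat and a :: "nat \<Rightarrow> nat \<Rightarrow> 'k::field"
  assumes "regular_matroid n \<C>"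
    and "r \<le> n"
    and "is_basis \<C> {1..n} {n-r+1..n}"
    and "admissible \<C> {1..n} {n-r+1..n} a"
  defines "\<phi> \<equiv> peval (subst_var n r \<C> a)"
    and "\<Theta> \<equiv> theta \<C> {1..n} {n-r+1..n} a ` {n-r+1..n}"
    and "I \<equiv> ideal_in (polys_in {1..n}) (bc_monomial ` \<C>)"
    and "J \<equiv> ideal_in (polys_in {1..n-r}) ((\<lambda>C. peval (subst_var n r \<C> a) (bc_monomial C)) ` \<C>)"
  shows "\<phi> ` polys_in {1..n} = polys_in {1..n-r}
    \<and> (\<forall>p\<in>polys_in {1..n}. \<phi> p = 0 \<longleftrightarrow> p \<in> ideal_in (polys_in {1..n}) \<Theta>)
    \<and> \<phi> ` ideal_in (polys_in {1..n}) (bc_monomial ` \<C> \<union> \<Theta>) = J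
    \<and> (\<forall>p\<in>polys_in {1..n}. \<phi> p \<in> J \<longleftrightarrow> p \<in> ideal_in (polys_in {1..n}) (bc_monomial ` \<C> \<union> \<Theta>))"
proof -
  define B where "B = {n-r+1..n}"
  define R where "R = (polys_in {1..n} :: 'k mpoly set)"
  define R' where "R' = (polys_in {1..n-r} :: 'k mpoly set)"
  define f where "f = subst_var n r \<C> a"
  define coc where "coc j = fund_coc \<C> {1..n} B j" for j
  define K where "K = ideal_in R \<Theta>"
  define L where "L = ideal_in R (bc_monomial ` \<C> \<union> \<Theta>)"
  have phi: "\<phi> = peval f" by (simp add: \<phi>_def f_def)
  obtain m A where CA: "\<C> = col_circuits m n A"
    using assms(1) unfolding regular_matroid_def by blast
  interpret aug_matroid \<C> "{1..n}" using col_aug_matroid CA by simp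
  have EB: "{1..n} - B = {1..n-r}" using assms(2) by (auto simp: B_def)
  have RR': "R' \<subseteq> R" unfolding R_def R'_def by (rule polys_in_mono) auto
  have cocp: "coc j \<in> cocircuits \<C> {1..n} \<and> coc j \<subseteq> {1..n-r} \<union> {j} \<and> j \<in> coc j" if "j \<in> B" for j
    using fund_coc_props[OF assms(3)[folded B_def] that] EB by (simp add: coc_def)
  have fincoc: "finite (coc j)" if "j \<in> B" for j
    using cocp[OF that] by (meson finite_Un finite_atLeastAtMost finite.emptyI finite.insertI rev_finite_subset)
  have BE: "B \<subseteq> {1..n}" using assms(2) by (auto simp: B_def)
  have ajj: "a j j \<noteq> 0" if "j \<in> B" for j
  proof -
    obtain \<tau> where tau: "is_signing (cocircuits \<C> {1..n}) {1..n} \<tau>"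
      "\<forall>j\<in>B. \<forall>i\<in>{1..n}. a j i = \<tau> (fund_coc \<C> {1..n} B j) i"
      using assms(4) unfolding admissible_def B_def by blast
    have "a j j = \<tau> (coc j) j" using tau(2) that BE by (auto simp: coc_def)
    moreover have "\<tau> (coc j) j = 1 \<or> \<tau> (coc j) j = -1"
      using tau(1) cocp[OF that] that BE unfolding is_signing_def by blast
    ultimately show ?thesis by auto
  qed
  have fV: "f i = Var i" if "i \<in> {1..n-r}" for i
    using that by (simp add: f_def subst_var_def)
  have fB: "f j = - (Const (inverse (a j j)) * (\<Sum>i\<in>coc j - {j}. Const (a j i) * Var i))" if "j \<in> B" for j
    using that assms(2) by (auto simp: f_def subst_var_def coc_def B_def)
  have fR': "f i \<in> R'" if "i \<in> {1..n}" for i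
  proof (cases "i \<in> B")
    case True
    have "coc i - {i} \<subseteq> {1..n-r}" using cocp[OF True] by auto
    then show ?thesis unfolding fB[OF True] R'_def
      by (intro polys_in_uminus polys_in_mult polys_in_Const polys_in_sum polys_in_Var) auto
  next
    case False
    then have "i \<in> {1..n-r}" using that EB by auto
    then show ?thesis using fV by (simp add: R'_def polys_in_Var)
  qed
  have phi_in: "\<phi> p \<in> R'" if "p \<in> R" for p
    using that fR' unfolding phi R_def R'_def by (intro peval_in[where V="{1..n}"]) auto
  have phi_id: "\<phi> p = p" if "p \<in> R'" for p
    unfolding phi using that fV by (intro peval_id[where V="{1..n-r}"]) (auto simp: R'_def)
  have theta_eq: "theta \<C> {1..n} {n-r+1..n} a j = Const (a j j) * (Var j - f j)" if "j \<in> B" for j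
  proof -
    let ?S = "(\<Sum>i\<in>coc j - {j}. Const (a j i) * Var i)"
    have "theta \<C> {1..n} {n-r+1..n} a j = (\<Sum>i\<in>coc j. Const (a j i) * Var i)"
      by (simp add: theta_def coc_def B_def)
    also have "\<dots> = Const (a j j) * Var j + ?S"
    proof -
      have jc: "j \<in> coc j" using cocp[OF that] by blast
      show ?thesis using sum.remove[OF fincoc[OF that] jc, of "\<lambda>i. Const (a j i) * Var i"] by simp
    qed
    also have "\<dots> = Const (a j j) * (Var j - f j)"
    proof -
      have "Const (a j j) * Const (inverse (a j j)) = (1 :: 'k mpoly)"
        using ajj[OF that] Const_mult[of "a j j" "inverse (a j j)"] by simp
      then have h: "Const (a j j) * (Const (inverse (a j j)) * ?S) = ?S"
        by (simp only: mult.assoc[symmetric] mult_1)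
      have "Var j - f j = Var j + Const (inverse (a j j)) * ?S"
        unfolding fB[OF that] by simp
      then show ?thesis by (simp only: distrib_left h)
    qed
    finally show ?thesis .
  qed
  have theta_in: "theta \<C> {1..n} {n-r+1..n} a j \<in> R" if "j \<in> B" for j
  proof -
    have s1: "coc j \<subseteq> {1..n-r} \<union> {j}" using cocp[OF that] by blast
    have s2: "{1..n-r} \<union> {j} \<subseteq> {1..n}" using BE that by auto
    have "coc j \<subseteq> {1..n}" using s1 s2 by (rule subset_trans)
    then show ?thesis unfolding theta_def R_def coc_def[symmetric] B_def[symmetric]
      by (intro polys_in_sum polys_in_mult polys_in_Const polys_in_Var) auto
  qed
  have ThB: "\<Theta> = theta \<C> {1..n} {n-r+1..n} a ` B" unfolding \<Theta>_def B_def ..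
  have ThR: "\<Theta> \<subseteq> R" unfolding ThB using theta_in by blast
  have phi_theta: "\<phi> g = 0" if gT: "g \<in> \<Theta>" for g
  proof -
    obtain j where j: "j \<in> B" "g = theta \<C> {1..n} {n-r+1..n} a j" using gT unfolding ThB by blast
    have "f j \<in> R'" using fR' BE j by auto
    then have "\<phi> (f j) = f j" by (rule phi_id)
    then show ?thesis unfolding j(2) theta_eq[OF j(1)] phi by (simp add: peval_mult peval_diff)
  qed
  have diffK: "Var j - f j \<in> K" if "j \<in> B" for j
  proof -
    have "Var j - f j = Const (inverse (a j j)) * theta \<C> {1..n} {n-r+1..n} a j"
      unfolding theta_eq[OF that] using ajj[OF that]
      by (simp add: mult.assoc[symmetric] Const_mult[symmetric])
    also have "\<dots> \<in> K" unfolding K_def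
      by (rule ideal_in_gen) (use that in \<open>auto simp: R_def ThB\<close>)
    finally show ?thesis .
  qed
  have K0: "0 \<in> K" by (simp add: K_def ideal_in_0)
  have Kadd: "x + y \<in> K" if "x \<in> K" "y \<in> K" for x y
    using that unfolding K_def R_def by (rule ideal_in_add)
  have Kmult: "c * x \<in> K" if "c \<in> R" "x \<in> K" for c x
    using that unfolding K_def R_def by (rule ideal_in_mult)
  have Rmult: "p * q \<in> R" if "p \<in> R" "q \<in> R" for p q using that unfolding R_def by (rule polys_in_mult)
  have Radd: "p + q \<in> R" if "p \<in> R" "q \<in> R" for p q using that unfolding R_def by (rule polys_in_add)
  have Rdiff: "p - q \<in> R" if "p \<in> R" "q \<in> R" for p q using that unfolding R_def by (rule polys_in_diff)
  have kerK: "p - \<phi> p \<in> K" if "p \<in> R" for p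
  proof -
    have "p \<in> R \<and> p - \<phi> p \<in> K"
      using that[unfolded R_def]
    proof (induction rule: polys_in_induct)
      case (const c) then show ?case using K0 by (simp add: phi R_def)
    next
      case (var i)
      show ?case
      proof (cases "i \<in> B")
        case True then show ?thesis using diffK var by (simp add: phi R_def polys_in_Var)
      next
        case False
        then have "i \<in> {1..n-r}" using var EB by auto
        then show ?thesis using fV K0 var by (simp add: phi R_def polys_in_Var)
      qed
    next
      case (add p q)
      have e: "p + q - \<phi> (p + q) = (p - \<phi> p) + (q - \<phi> q)" by (simp add: phi peval_add)
      have "(p - \<phi> p) + (q - \<phi> q) \<in> K" using add by (intro Kadd) auto
      moreover have "p + q \<in> R" using add by (intro Radd) auto
      ultimately show ?case unfolding e by simp
    next
      case (mult p q)
      have "p * q - \<phi> (p * q) = q * (p - \<phi> p) + \<phi> p * (q - \<phi> q)"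
        by (simp add: phi peval_mult algebra_simps)
      note e = this
      have pR: "\<phi> p \<in> R" using phi_in mult RR' by auto
      have "q * (p - \<phi> p) + \<phi> p * (q - \<phi> q) \<in> K" using mult pR by (intro Kadd Kmult) auto
      moreover have "p * q \<in> R" using mult by (intro Rmult) auto
      ultimately show ?case unfolding e by simp
    qed
    then show ?thesis by simp
  qed
  have Kphi: "\<phi> x = 0" if "x \<in> K" for x
    using that[unfolded K_def]
    by (rule ideal_in_image) (auto simp: phi peval_mult peval_add phi_theta[unfolded phi])
  have KR: "K \<subseteq> R" unfolding K_def R_def by (rule ideal_in_subset) (use ThR in \<open>simp add: R_def\<close>)
  have bcR: "bc_monomial C \<in> R" if "C \<in> \<C>" for C
  proof -
    have "C \<subseteq> {1..n}" using that CA by (auto simp: col_circuits_def)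
    then show ?thesis unfolding bc_monomial_def R_def
      by (intro polys_in_prod polys_in_Var) auto
  qed
  have GR: "bc_monomial ` \<C> \<union> \<Theta> \<subseteq> R" using bcR ThR by auto
  have LR: "L \<subseteq> R" unfolding L_def R_def by (rule ideal_in_subset) (use GR in \<open>simp add: R_def\<close>)
  have KL: "K \<subseteq> L" unfolding K_def L_def by (rule ideal_in_mono) auto
  have Jdef: "J = ideal_in R' (\<phi> ` bc_monomial ` \<C>)"
    unfolding J_def R'_def \<phi>_def by (simp add: image_image)
  have J0: "0 \<in> J" by (simp add: Jdef ideal_in_0)
  have img: "\<phi> ` L = J"
  proof
    show "\<phi> ` L \<subseteq> J"
    proof
      fix y assume "y \<in> \<phi> ` L"
      then obtain x where x: "x \<in> L" "y = \<phi> x" by blast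
      have "\<phi> x \<in> J" using x(1)[unfolded L_def]
      proof (rule ideal_in_image)
        fix c g assume c: "c \<in> R" and g: "g \<in> bc_monomial ` \<C> \<union> \<Theta>"
        show "\<phi> (c * g) \<in> J"
        proof (cases "g \<in> \<Theta>")
          case True then show ?thesis using J0 phi_theta by (simp add: phi peval_mult)
        next
          case False
          then have "\<phi> g \<in> \<phi> ` bc_monomial ` \<C>" using g by auto
          moreover have "\<phi> c \<in> R'" using phi_in c by simp
          ultimately show ?thesis unfolding Jdef by (simp add: phi peval_mult ideal_in_gen)
        qed
      next
        show "\<phi> 0 \<in> J" using J0 by (simp add: phi)
      next
        fix x y assume "\<phi> x \<in> J" "\<phi> y \<in> J"
        then show "\<phi> (x + y) \<in> J" unfolding Jdef R'_def by (simp add: phi peval_add ideal_in_add)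
      qed
      then show "y \<in> J" using x by simp
    qed
  next
    show "J \<subseteq> \<phi> ` L"
    proof
      fix y assume "y \<in> J"
      then show "y \<in> \<phi> ` L" unfolding Jdef
      proof (rule ideal_in_image)
        fix c g assume c: "c \<in> R'" and g: "g \<in> \<phi> ` bc_monomial ` \<C>"
        then obtain C where C: "C \<in> \<C>" "g = \<phi> (bc_monomial C)" by blast
        have "c * bc_monomial C \<in> L" unfolding L_def
          by (rule ideal_in_gen) (use c RR' C in auto)
        moreover have "\<phi> (c * bc_monomial C) = c * g"
          using C phi_id[OF c] by (simp add: phi peval_mult)
        ultimately show "c * g \<in> \<phi> ` L" by (metis image_eqI)
      next
        have "0 \<in> L" by (simp add: L_def ideal_in_0)
        then show "0 \<in> \<phi> ` L" by (metis image_eqI peval_0 phi)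
      next
        fix x y assume "x \<in> \<phi> ` L" "y \<in> \<phi> ` L"
        then obtain x' y' where "x' \<in> L" "y' \<in> L" "x = \<phi> x'" "y = \<phi> y'" by blast
        moreover have "x' + y' \<in> L" using \<open>x' \<in> L\<close> \<open>y' \<in> L\<close> unfolding L_def R_def by (rule ideal_in_add)
        ultimately show "x + y \<in> \<phi> ` L" by (metis image_eqI peval_add phi)
      qed
    qed
  qed
  have c1: "\<phi> ` R = R'"
  proof
    show "\<phi> ` R \<subseteq> R'" using phi_in by auto
    show "R' \<subseteq> \<phi> ` R" using phi_id RR' by (metis image_eqI subsetD subsetI)
  qed
  have c2: "\<forall>p\<in>R. \<phi> p = 0 \<longleftrightarrow> p \<in> K"
  proof (intro ballI iffI)
    fix p assume "p \<in> R" "\<phi> p = 0"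
    then show "p \<in> K" using kerK by force
  next
    fix p assume "p \<in> K" then show "\<phi> p = 0" by (rule Kphi)
  qed
  have c4: "\<forall>p\<in>R. \<phi> p \<in> J \<longleftrightarrow> p \<in> L"
  proof (intro ballI iffI)
    fix p assume p: "p \<in> R" "\<phi> p \<in> J"
    then obtain q where q: "q \<in> L" "\<phi> p = \<phi> q" using img by (metis imageE)
    have "q \<in> R" using q LR by auto
    have "\<phi> (p - q) = 0" using q by (simp add: phi peval_diff)
    then have "p - q \<in> K" using c2 Rdiff[OF p(1) \<open>q \<in> R\<close>] by blast
    then have "p - q \<in> L" using KL by auto
    then have "(p - q) + q \<in> L" using q(1) unfolding L_def R_def by (rule ideal_in_add)
    then show "p \<in> L" by simp
  next
    fix p assume "p \<in> L" then show "\<phi> p \<in> J" using img by auto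
  qed
  show ?thesis using c1 c2 img c4 by (simp add: R_def R'_def K_def L_def)
qed


end
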